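(* Let $p\ge2$, $X=\{0,1,\dots,p\}$, and for $w\in X^\infty$ let $I_w=\{z\in X^\infty:\Gamma^p_z\text{ and }\Gamma^p_w\text{ are isomorphic}\}$. Then $\nu(I_w)=0$ for every $w\in X^\infty$.
   Context: $\mathcal G_{S_p}$ is the group generated by $e_1,\dots,e_p$ acting on $X^\infty$ by $e_i(0x)=i\,e_i(x)$, $e_i(ix)=0x$, $e_i(jx)=jx$ for $j\notin\{0,i\}$; $\Gamma^p_w$ is the infinite Schreier graph with vertex set the orbit of $w$ and an edge joining $x$ and $e_i(x)$ for each vertex $x$ and each $i$; isomorphism is isomorphism of unrooted graphs. $\nu$ is the uniform (Bernoulli product) measure on $X^\infty$. *)

theory Defs
  imports "HOL-Probability.Probability"
begin

text \<open>Infinite words over X = {0,..,p} are modelled as functions nat \<Rightarrow> nat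
  (with values \<le> p when they belong to X^\<infinity>).\<close>

definition word_cons :: "nat \<Rightarrow> (nat \<Rightarrow> nat) \<Rightarrow> nat \<Rightarrow> nat" where
  "word_cons a x = (\<lambda>k. case k of 0 \<Rightarrow> a | Suc k' \<Rightarrow> x k')"

text \<open>The generator e_i, given explicitly: e_i(0x) = i e_i(x), e_i(ix) = 0x,
  e_i(jx) = jx for j not in {0,i}; on the all-zero word it gives the constant word i.\<close>
definition gen_e :: "nat \<Rightarrow> (nat \<Rightarrow> nat) \<Rightarrow> nat \<Rightarrow> nat" where
  "gen_e i x =
     (if \<exists>n. x n \<noteq> 0 then
        (let m = (LEAST n. x n \<noteq> 0) in
          (\<lambda>k. if k < m then i else if k = m then (if x m = i then 0 else x m) else x k))
      else (\<lambda>_. i))"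

inductive_set orbit :: "nat \<Rightarrow> (nat \<Rightarrow> nat) \<Rightarrow> (nat \<Rightarrow> nat) set" for p w where
  base: "w \<in> orbit p w"
| fwd: "x \<in> orbit p w \<Longrightarrow> 1 \<le> i \<Longrightarrow> i \<le> p \<Longrightarrow> gen_e i x \<in> orbit p w"
| bwd: "x \<in> orbit p w \<Longrightarrow> 1 \<le> i \<Longrightarrow> i \<le> p \<Longrightarrow> gen_e i y = x \<Longrightarrow> y \<in> orbit p w"

text \<open>Schreier graph Gamma^p_w as a multigraph: one edge (x,i) for every vertex x
  and every i in {1..p}, joining x and e_i(x) (a loop if e_i(x) = x).\<close>
definition schreier_edges :: "nat \<Rightarrow> (nat \<Rightarrow> nat) \<Rightarrow> ((nat \<Rightarrow> nat) \<times> nat) set" where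
  "schreier_edges p w = {(x, i). x \<in> orbit p w \<and> 1 \<le> i \<and> i \<le> p}"

definition edge_ends :: "((nat \<Rightarrow> nat) \<times> nat) \<Rightarrow> (nat \<Rightarrow> nat) set" where
  "edge_ends \<epsilon> = {fst \<epsilon>, gen_e (snd \<epsilon>) (fst \<epsilon>)}"

definition schreier_iso :: "nat \<Rightarrow> (nat \<Rightarrow> nat) \<Rightarrow> (nat \<Rightarrow> nat) \<Rightarrow> bool" where
  "schreier_iso p w z =
     (\<exists>f g. bij_betw f (orbit p w) (orbit p z) \<and>
            bij_betw g (schreier_edges p w) (schreier_edges p z) \<and>
            (\<forall>\<epsilon>\<in>schreier_edges p w. edge_ends (g \<epsilon>) = f ` edge_ends \<epsilon>))"

definition nu :: "nat \<Rightarrow> (nat \<Rightarrow> nat) measure" where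
  "nu p = (\<Pi>\<^sub>M n\<in>(UNIV::nat set). measure_pmf (pmf_of_set {0..p}))"

definition X_inf :: "nat \<Rightarrow> (nat \<Rightarrow> nat) set" where
  "X_inf p = {x. \<forall>n. x n \<le> p}"

definition iso_class :: "nat \<Rightarrow> (nat \<Rightarrow> nat) \<Rightarrow> (nat \<Rightarrow> nat) set" where
  "iso_class p w = {z \<in> X_inf p. schreier_iso p z w}"


end

theory Submission
  imports Defs
begin


definition wshift :: "(nat \<Rightarrow> nat) \<Rightarrow> nat \<Rightarrow> nat" where
  "wshift x = (\<lambda>k. x (Suc k))"

lemma wc0[simp]: "word_cons a x 0 = a" by (simp add: word_cons_def)
lemma wcS[simp]: "word_cons a x (Suc k) = x k" by (simp add: word_cons_def)
lemma wc_shift[simp]: "word_cons (x 0) (wshift x) = x"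
  by (rule ext) (simp add: word_cons_def wshift_def split: nat.split)
lemma shift_wc[simp]: "wshift (word_cons a x) = x"
  by (simp add: wshift_def)
lemma wc_inj[simp]: "word_cons a x = word_cons b y \<longleftrightarrow> a = b \<and> x = y"
  by (metis shift_wc wc0)
lemma wc_cases: obtains a y where "x = word_cons a y"
  using wc_shift by metis

lemma Least_Suc_nat:
  assumes "P n" "\<not> P 0" shows "(LEAST n. P n) = Suc (LEAST m. P (Suc m))"
  by (rule Least_Suc[OF assms])

lemma gen_e_expl:
  assumes "\<exists>n. x n \<noteq> 0"
  shows "gen_e i x = (\<lambda>k. if k < (LEAST n. x n \<noteq> 0) then i else if k = (LEAST n. x n \<noteq> 0) then (if x (LEAST n. x n \<noteq> 0) = i then 0 else x (LEAST n. x n \<noteq> 0)) else x k)"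
  unfolding gen_e_def by (simp only: if_P[OF assms] Let_def)

lemma gen_e_cons0:
  assumes "i \<noteq> 0" shows "gen_e i (word_cons 0 y) = word_cons i (gen_e i y)"
proof (cases "\<exists>n. y n \<noteq> 0")
  case True
  then obtain n where n: "y n \<noteq> 0" by blast
  have ex: "\<exists>n. word_cons 0 y n \<noteq> 0" using n by (metis wcS)
  have L: "(LEAST n. word_cons 0 y n \<noteq> 0) = Suc (LEAST n. y n \<noteq> 0)"
    using Least_Suc_nat[of "\<lambda>n. word_cons 0 y n \<noteq> 0" "Suc n"] n by simp
  show ?thesis
    unfolding gen_e_expl[OF ex] gen_e_expl[OF True] L
    by (rule ext) (auto simp: word_cons_def split: nat.split)
next
  case False
  then have "\<not> (\<exists>n. word_cons 0 y n \<noteq> 0)" by (auto simp: word_cons_def split: nat.split)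
  then show ?thesis using False unfolding gen_e_def
    by (auto simp: word_cons_def split: nat.split intro!: ext)
qed

lemma gen_e_consi:
  assumes "i \<noteq> 0" shows "gen_e i (word_cons i y) = word_cons 0 y"
proof -
  have ex: "\<exists>n. word_cons i y n \<noteq> 0" using assms by (metis wc0)
  have L: "(LEAST n. word_cons i y n \<noteq> 0) = 0" using assms by (simp add: Least_eq_0)
  have "gen_e i (word_cons i y) = (\<lambda>k. if k < 0 then i else if k = 0 then (if word_cons i y 0 = i then 0 else word_cons i y 0) else word_cons i y k)"
    unfolding gen_e_def by (simp only: if_P[OF ex] L Let_def)
  then show ?thesis using assms by (auto intro!: ext simp: word_cons_def split: nat.split)
qed

lemma gen_e_consj:
  assumes "j \<noteq> 0" "j \<noteq> i" shows "gen_e i (word_cons j y) = word_cons j y"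
proof -
  have ex: "\<exists>n. word_cons j y n \<noteq> 0" using assms by (metis wc0)
  have L: "(LEAST n. word_cons j y n \<noteq> 0) = 0" using assms by (simp add: Least_eq_0)
  have "gen_e i (word_cons j y) = (\<lambda>k. if k < 0 then i else if k = 0 then (if word_cons j y 0 = i then 0 else word_cons j y 0) else word_cons j y k)"
    unfolding gen_e_def by (simp only: if_P[OF ex] L Let_def)
  then show ?thesis using assms by (auto intro!: ext simp: word_cons_def split: nat.split)
qed

definition geinv :: "nat \<Rightarrow> (nat \<Rightarrow> nat) \<Rightarrow> nat \<Rightarrow> nat" where
  "geinv i u =
     (if \<exists>n. u n \<noteq> i then
        (let m = (LEAST n. u n \<noteq> i) in
          (\<lambda>k. if k < m then 0 else if k = m then (if u m = 0 then i else u m) else u k))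
      else (\<lambda>_. 0))"

lemma geinv_expl:
  assumes "\<exists>n. x n \<noteq> i"
  shows "geinv i x = (\<lambda>k. if k < (LEAST n. x n \<noteq> i) then 0 else if k = (LEAST n. x n \<noteq> i) then (if x (LEAST n. x n \<noteq> i) = 0 then i else x (LEAST n. x n \<noteq> i)) else x k)"
  unfolding geinv_def by (simp only: if_P[OF assms] Let_def)

lemma geinv_consi:
  assumes "i \<noteq> 0" shows "geinv i (word_cons i y) = word_cons 0 (geinv i y)"
proof (cases "\<exists>n. y n \<noteq> i")
  case True
  then obtain n where n: "y n \<noteq> i" by blast
  have ex: "\<exists>n. word_cons i y n \<noteq> i" using n by (metis wcS)
  have L: "(LEAST n. word_cons i y n \<noteq> i) = Suc (LEAST n. y n \<noteq> i)"
    using Least_Suc_nat[of "\<lambda>n. word_cons i y n \<noteq> i" "Suc n"] n by simp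
  show ?thesis
    unfolding geinv_expl[OF ex] geinv_expl[OF True] L
    by (rule ext) (auto simp: word_cons_def split: nat.split)
next
  case False
  then have "\<not> (\<exists>n. word_cons i y n \<noteq> i)" by (auto simp: word_cons_def split: nat.split)
  then show ?thesis using False unfolding geinv_def
    by (auto simp: word_cons_def split: nat.split intro!: ext)
qed

lemma geinv_cons0:
  assumes "i \<noteq> 0" shows "geinv i (word_cons 0 y) = word_cons i y"
proof -
  have ex: "\<exists>n. word_cons 0 y n \<noteq> i" using assms by (metis wc0)
  have L: "(LEAST n. word_cons 0 y n \<noteq> i) = 0" using assms by (simp add: Least_eq_0)
  have "geinv i (word_cons 0 y) = (\<lambda>k. if k < 0 then 0 else if k = 0 then (if word_cons 0 y 0 = 0 then i else word_cons 0 y 0) else word_cons 0 y k)"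
    unfolding geinv_def by (simp only: if_P[OF ex] L Let_def)
  then show ?thesis using assms by (auto intro!: ext simp: word_cons_def split: nat.split)
qed

lemma geinv_consj:
  assumes "j \<noteq> 0" "j \<noteq> i" shows "geinv i (word_cons j y) = word_cons j y"
proof -
  have ex: "\<exists>n. word_cons j y n \<noteq> i" using assms by (metis wc0)
  have L: "(LEAST n. word_cons j y n \<noteq> i) = 0" using assms by (simp add: Least_eq_0)
  have "geinv i (word_cons j y) = (\<lambda>k. if k < 0 then 0 else if k = 0 then (if word_cons j y 0 = 0 then i else word_cons j y 0) else word_cons j y k)"
    unfolding geinv_def by (simp only: if_P[OF ex] L Let_def)
  then show ?thesis using assms by (auto intro!: ext simp: word_cons_def split: nat.split)
qed

lemma geinv_gen_e_pt: "i \<noteq> 0 \<Longrightarrow> \<forall>x. geinv i (gen_e i x) k = x k"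
proof (induction k)
  case 0
  show ?case
  proof
    fix x :: "nat \<Rightarrow> nat"
    obtain a y where x: "x = word_cons a y" by (rule wc_cases)
    show "geinv i (gen_e i x) 0 = x 0"
      using 0 by (cases "a = 0"; cases "a = i") (auto simp: x gen_e_cons0 gen_e_consi gen_e_consj geinv_consi geinv_cons0 geinv_consj)
  qed
next
  case (Suc k)
  show ?case
  proof
    fix x :: "nat \<Rightarrow> nat"
    obtain a y where x: "x = word_cons a y" by (rule wc_cases)
    show "geinv i (gen_e i x) (Suc k) = x (Suc k)"
      using Suc by (cases "a = 0"; cases "a = i") (auto simp: x gen_e_cons0 gen_e_consi gen_e_consj geinv_consi geinv_cons0 geinv_consj)
  qed
qed

lemma gen_e_geinv_pt: "i \<noteq> 0 \<Longrightarrow> \<forall>x. gen_e i (geinv i x) k = x k"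
proof (induction k)
  case 0
  show ?case
  proof
    fix x :: "nat \<Rightarrow> nat"
    obtain a y where x: "x = word_cons a y" by (rule wc_cases)
    show "gen_e i (geinv i x) 0 = x 0"
      using 0 by (cases "a = 0"; cases "a = i") (auto simp: x gen_e_cons0 gen_e_consi gen_e_consj geinv_consi geinv_cons0 geinv_consj)
  qed
next
  case (Suc k)
  show ?case
  proof
    fix x :: "nat \<Rightarrow> nat"
    obtain a y where x: "x = word_cons a y" by (rule wc_cases)
    show "gen_e i (geinv i x) (Suc k) = x (Suc k)"
      using Suc by (cases "a = 0"; cases "a = i") (auto simp: x gen_e_cons0 gen_e_consi gen_e_consj geinv_consi geinv_cons0 geinv_consj)
  qed
qed

lemma geinv_gen_e[simp]: "i \<noteq> 0 \<Longrightarrow> geinv i (gen_e i x) = x"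
  using geinv_gen_e_pt by blast
lemma gen_e_geinv[simp]: "i \<noteq> 0 \<Longrightarrow> gen_e i (geinv i x) = x"
  using gen_e_geinv_pt by blast
lemma gen_e_inj: "i \<noteq> 0 \<Longrightarrow> gen_e i x = gen_e i y \<longleftrightarrow> x = y"
  by (metis geinv_gen_e)



lemma gen_e_wc_cases:
  assumes "i \<noteq> 0"
  shows "gen_e i (word_cons a y) = (if a = 0 then word_cons i (gen_e i y) else if a = i then word_cons 0 y else word_cons a y)"
  using assms by (simp add: gen_e_cons0 gen_e_consi gen_e_consj)

lemma orbit_shift:
  assumes "z 0 \<le> p" "u \<in> orbit p z"
  shows "u 0 \<le> p \<and> wshift u \<in> orbit p (wshift z)"
  using assms(2)
proof (induction rule: orbit.induct)
  case base
  then show ?case using assms(1) by (auto intro: orbit.base)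
next
  case (fwd x i)
  obtain a y where x: "x = word_cons a y" by (rule wc_cases)
  have i0: "i \<noteq> 0" using fwd by auto
  show ?case using fwd i0 by (auto simp: x gen_e_wc_cases intro: orbit.fwd)
next
  case (bwd x i y)
  obtain a y' where y: "y = word_cons a y'" by (rule wc_cases)
  have i0: "i \<noteq> 0" using bwd by auto
  show ?case
  proof (cases "a = 0")
    case True
    then have "word_cons i (gen_e i y') = x" using bwd i0 by (simp add: y gen_e_wc_cases)
    then have "wshift x = gen_e i y'" by (metis shift_wc)
    then show ?thesis using bwd True y by (auto intro: orbit.bwd)
  next
    case False
    then show ?thesis using bwd i0 y by (auto simp: gen_e_wc_cases split: if_splits)
  qed
qed

lemma orbit_switch:
  assumes "word_cons b y \<in> orbit p z" "b \<le> p" "a \<le> p"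
  shows "word_cons a y \<in> orbit p z"
proof -
  have 0: "word_cons 0 y \<in> orbit p z"
  proof (cases "b = 0")
    case False
    then have "gen_e b (word_cons b y) = word_cons 0 y" by (simp add: gen_e_consi)
    then show ?thesis using orbit.fwd[OF assms(1), of b] False assms(2) by auto
  qed (use assms in auto)
  show ?thesis
  proof (cases "a = 0")
    case False
    then have "gen_e a (word_cons a y) = word_cons 0 y" by (simp add: gen_e_consi)
    then show ?thesis using orbit.bwd[OF 0, of a] False assms(3) by auto
  qed (use 0 in auto)
qed

lemma orbit_cons:
  assumes "z 0 \<le> p" "y \<in> orbit p (wshift z)" "a \<le> p"
  shows "word_cons a y \<in> orbit p z"
  using assms(2,3)
proof (induction arbitrary: a rule: orbit.induct)
  case base
  then show ?case using orbit_switch[of "z 0" "wshift z" p z a] assms(1) by (auto intro: orbit.base)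
next
  case (fwd x i)
  have "gen_e i (word_cons 0 x) = word_cons i (gen_e i x)" using fwd by (simp add: gen_e_cons0)
  then have "word_cons i (gen_e i x) \<in> orbit p z" using orbit.fwd[OF fwd.IH[of 0], of i] fwd by auto
  then show ?case using orbit_switch fwd by blast
next
  case (bwd x i y)
  have "gen_e i (word_cons 0 y) = word_cons i x" using bwd by (simp add: gen_e_cons0)
  then have "word_cons 0 y \<in> orbit p z" using orbit.bwd[OF bwd.IH[of i], of i] bwd by auto
  then show ?case using orbit_switch bwd by blast
qed

lemma orbit_Xinf: "z \<in> X_inf p \<Longrightarrow> u \<in> orbit p z \<Longrightarrow> u k \<le> p"
proof (induction k arbitrary: z u)
  case 0
  then show ?case using orbit_shift[of z p u] by (auto simp: X_inf_def)
next
  case (Suc k)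
  have "wshift z \<in> X_inf p" using Suc.prems by (auto simp: X_inf_def wshift_def)
  moreover have "wshift u \<in> orbit p (wshift z)" using orbit_shift[of z p u] Suc.prems by (auto simp: X_inf_def)
  ultimately show ?case using Suc.IH by (auto simp: wshift_def)
qed



definition hasloop :: "nat \<Rightarrow> (nat \<Rightarrow> nat) \<Rightarrow> (nat \<Rightarrow> nat) \<Rightarrow> bool" where
  "hasloop p z x = (\<exists>\<epsilon>\<in>schreier_edges p z. edge_ends \<epsilon> = {x})"
definition adj :: "nat \<Rightarrow> (nat \<Rightarrow> nat) \<Rightarrow> (nat \<Rightarrow> nat) \<Rightarrow> (nat \<Rightarrow> nat) \<Rightarrow> bool" where
  "adj p z x y = (\<exists>\<epsilon>\<in>schreier_edges p z. edge_ends \<epsilon> = {x, y})"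
definition multi :: "nat \<Rightarrow> (nat \<Rightarrow> nat) \<Rightarrow> (nat \<Rightarrow> nat) \<Rightarrow> bool" where
  "multi p z x = (\<exists>y \<epsilon>1 \<epsilon>2. y \<noteq> x \<and> \<epsilon>1 \<in> schreier_edges p z \<and> \<epsilon>2 \<in> schreier_edges p z \<and> \<epsilon>1 \<noteq> \<epsilon>2
      \<and> edge_ends \<epsilon>1 = {x, y} \<and> edge_ends \<epsilon>2 = {x, y})"
definition riso where
  "riso p z z' f g = (bij_betw f (orbit p z) (orbit p z') \<and>
      bij_betw g (schreier_edges p z) (schreier_edges p z') \<and>
      (\<forall>\<epsilon>\<in>schreier_edges p z. edge_ends (g \<epsilon>) = f ` edge_ends \<epsilon>))"

lemma edges_iff: "(a, i) \<in> schreier_edges p z \<longleftrightarrow> a \<in> orbit p z \<and> 1 \<le> i \<and> i \<le> p"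
  by (simp add: schreier_edges_def)
lemma ends_pair: "edge_ends (a, i) = {a, gen_e i a}"
  by (simp add: edge_ends_def)

lemma ends_sub: "\<epsilon> \<in> schreier_edges p z \<Longrightarrow> edge_ends \<epsilon> \<subseteq> orbit p z"
  by (cases \<epsilon>) (auto simp: edges_iff ends_pair intro: orbit.fwd)

lemma riso_inv:
  assumes "riso p z z' f g"
  shows "riso p z' z (inv_into (orbit p z) f) (inv_into (schreier_edges p z) g)"
  unfolding riso_def
proof (intro conjI ballI)
  show "bij_betw (inv_into (orbit p z) f) (orbit p z') (orbit p z)"
    using assms unfolding riso_def by (simp add: bij_betw_inv_into)
  show "bij_betw (inv_into (schreier_edges p z) g) (schreier_edges p z') (schreier_edges p z)"
    using assms unfolding riso_def by (simp add: bij_betw_inv_into)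
  fix e assume e: "e \<in> schreier_edges p z'"
  let ?d = "inv_into (schreier_edges p z) g e"
  have d: "?d \<in> schreier_edges p z" "g ?d = e"
    using assms e unfolding riso_def bij_betw_def
    by (auto intro: inv_into_into f_inv_into_f)
  have "edge_ends e = f ` edge_ends ?d" using assms d unfolding riso_def by auto
  moreover have "inj_on f (orbit p z)" using assms unfolding riso_def bij_betw_def by auto
  ultimately show "edge_ends (inv_into (schreier_edges p z) g e) = inv_into (orbit p z) f ` edge_ends e"
    using ends_sub[OF d(1)] by (simp add: inv_into_image_cancel)
qed

lemma riso_comp:
  assumes "riso p z z' f g" "riso p z' z'' f' g'"
  shows "riso p z z'' (f' \<circ> f) (g' \<circ> g)"
proof -
  have "\<forall>\<epsilon>\<in>schreier_edges p z. edge_ends ((g' \<circ> g) \<epsilon>) = (f' \<circ> f) ` edge_ends \<epsilon>"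
  proof
    fix e assume e: "e \<in> schreier_edges p z"
    then have "g e \<in> schreier_edges p z'" using assms(1) unfolding riso_def bij_betw_def by auto
    then show "edge_ends ((g' \<circ> g) e) = (f' \<circ> f) ` edge_ends e"
      using assms e unfolding riso_def by (simp add: image_comp)
  qed
  then show ?thesis using assms unfolding riso_def by (auto intro: bij_betw_trans)
qed

lemma loop_pres:
  assumes "riso p z z' f g" "hasloop p z x"
  shows "hasloop p z' (f x)"
  using assms unfolding riso_def hasloop_def bij_betw_def
  by (metis image_eqI image_empty image_insert)

lemma adj_pres:
  assumes "riso p z z' f g" "adj p z x y"
  shows "adj p z' (f x) (f y)"
  using assms unfolding riso_def adj_def bij_betw_def
  by (metis image_eqI image_empty image_insert)

lemma multi_pres:
  assumes "riso p z z' f g" "multi p z x"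
  shows "multi p z' (f x)"
proof -
  obtain y e1 e2 where h: "y \<noteq> x" "e1 \<in> schreier_edges p z" "e2 \<in> schreier_edges p z" "e1 \<noteq> e2"
    "edge_ends e1 = {x, y}" "edge_ends e2 = {x, y}"
    using assms(2) unfolding multi_def by blast
  have xy: "x \<in> orbit p z" "y \<in> orbit p z" using ends_sub[OF h(2)] h(5) by auto
  have injf: "inj_on f (orbit p z)" and injg: "inj_on g (schreier_edges p z)"
    and gE: "g ` schreier_edges p z = schreier_edges p z'"
    using assms(1) unfolding riso_def bij_betw_def by auto
  have "f y \<noteq> f x" using injf xy h(1) by (meson inj_on_eq_iff)
  moreover have "g e1 \<noteq> g e2" using injg h by (meson inj_on_eq_iff)
  moreover have "edge_ends (g e1) = {f x, f y}" "edge_ends (g e2) = {f x, f y}"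
    using assms(1) h unfolding riso_def by auto
  ultimately show ?thesis unfolding multi_def using gE h by blast
qed

lemma riso_inv_apply:
  assumes "riso p z z' f g" "x \<in> orbit p z"
  shows "inv_into (orbit p z) f (f x) = x"
  using assms unfolding riso_def bij_betw_def by (simp add: inv_into_f_f)

lemma loop_iff:
  assumes "riso p z z' f g" "x \<in> orbit p z"
  shows "hasloop p z' (f x) \<longleftrightarrow> hasloop p z x"
  using loop_pres[OF assms(1)] loop_pres[OF riso_inv[OF assms(1)], of "f x"] riso_inv_apply[OF assms] by auto

lemma multi_iff:
  assumes "riso p z z' f g" "x \<in> orbit p z"
  shows "multi p z' (f x) \<longleftrightarrow> multi p z x"
  using multi_pres[OF assms(1)] multi_pres[OF riso_inv[OF assms(1)], of "f x"] riso_inv_apply[OF assms] by auto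

lemma adj_iff:
  assumes "riso p z z' f g" "x \<in> orbit p z" "y \<in> orbit p z"
  shows "adj p z' (f x) (f y) \<longleftrightarrow> adj p z x y"
  using adj_pres[OF assms(1)] adj_pres[OF riso_inv[OF assms(1)], of "f x" "f y"]
    riso_inv_apply[OF assms(1,2)] riso_inv_apply[OF assms(1,3)] by auto

definition other :: "nat \<Rightarrow> nat" where "other j = (if j = 1 then 2 else 1)"
lemma other: "2 \<le> p \<Longrightarrow> 1 \<le> other j \<and> other j \<le> p \<and> other j \<noteq> j \<and> other j \<noteq> 0"
  by (auto simp: other_def)

lemma L1:
  assumes "2 \<le> p" "x \<in> orbit p z"
  shows "hasloop p z x \<longleftrightarrow> x 0 \<noteq> 0"
proof
  assume "hasloop p z x"
  then obtain a i where e: "(a, i) \<in> schreier_edges p z" "{a, gen_e i a} = {x}"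
    unfolding hasloop_def by (auto simp: ends_pair)
  then have "a = x" "gen_e i x = x" "i \<noteq> 0" by (auto simp: edges_iff)
  then show "x 0 \<noteq> 0"
    by (metis wc_shift gen_e_cons0 wc0)
next
  assume h: "x 0 \<noteq> 0"
  let ?i = "other (x 0)"
  have "gen_e ?i x = x" using gen_e_consj[of "x 0" ?i "wshift x"] h other[OF assms(1), of "x 0"] by simp
  then show "hasloop p z x" unfolding hasloop_def using other[OF assms(1), of "x 0"] assms(2)
    by (intro bexI[of _ "(x, ?i)"]) (auto simp: ends_pair edges_iff)
qed

lemma edge_other0:
  assumes "\<epsilon> \<in> schreier_edges p z" "edge_ends \<epsilon> = {x, v}" "v \<noteq> x" "x = word_cons 0 y"
  shows "\<exists>i. 1 \<le> i \<and> i \<le> p \<and> ((\<epsilon> = (x, i) \<and> v = word_cons i (gen_e i y)) \<or> (\<epsilon> = (v, i) \<and> v = word_cons i y))"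
proof -
  obtain a i where e: "\<epsilon> = (a, i)" by (cases \<epsilon>)
  have i: "1 \<le> i" "i \<le> p" "i \<noteq> 0" using assms(1) e by (auto simp: edges_iff)
  have "{a, gen_e i a} = {x, v}" using assms(2) e by (simp add: ends_pair)
  then have "(a = x \<and> gen_e i a = v) \<or> (a = v \<and> gen_e i a = x)" by (auto simp: doubleton_eq_iff)
  then show ?thesis
  proof
    assume "a = x \<and> gen_e i a = v"
    then show ?thesis using i e assms(4) by (auto simp: gen_e_cons0)
  next
    assume h: "a = v \<and> gen_e i a = x"
    obtain b u where v: "v = word_cons b u" by (rule wc_cases)
    have "b = i \<and> u = y" using h assms(3,4) i v by (auto simp: gen_e_wc_cases split: if_splits)
    then show ?thesis using i e h v by blast
  qed
qed

lemma L2: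
  assumes "2 \<le> p" "x \<in> orbit p z" "x = word_cons 0 y"
  shows "multi p z x \<longleftrightarrow> y 0 \<noteq> 0"
proof
  assume m: "multi p z x"
  show "y 0 \<noteq> 0"
  proof
    assume y0: "y 0 = 0"
    obtain v e1 e2 where h: "v \<noteq> x" "e1 \<in> schreier_edges p z" "e2 \<in> schreier_edges p z" "e1 \<noteq> e2"
      "edge_ends e1 = {x, v}" "edge_ends e2 = {x, v}"
      using m unfolding multi_def by blast
    obtain i1 where 1: "1 \<le> i1" "((e1 = (x, i1) \<and> v = word_cons i1 (gen_e i1 y)) \<or> (e1 = (v, i1) \<and> v = word_cons i1 y))"
      using edge_other0[OF h(2) h(5) h(1) assms(3)] by blast
    obtain i2 where 2: "1 \<le> i2" "((e2 = (x, i2) \<and> v = word_cons i2 (gen_e i2 y)) \<or> (e2 = (v, i2) \<and> v = word_cons i2 y))"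
      using edge_other0[OF h(3) h(6) h(1) assms(3)] by blast
    have "i1 = i2" using 1 2 by (metis wc0)
    moreover have "gen_e i1 y 0 = i1" using 1 y0 by (metis wc_shift gen_e_cons0 wc0 not_one_le_zero)
    ultimately show False using 1 2 h(4) y0 by auto
  qed
next
  assume y0: "y 0 \<noteq> 0"
  let ?i = "other (y 0)"
  have oi: "1 \<le> ?i" "?i \<le> p" "?i \<noteq> y 0" "?i \<noteq> 0" using other[OF assms(1)] by auto
  have gy: "gen_e ?i y = y" using gen_e_consj[of "y 0" ?i "wshift y"] y0 oi by simp
  let ?v = "word_cons ?i y"
  have gx: "gen_e ?i x = ?v" using assms(3) gy oi by (simp add: gen_e_cons0)
  have vo: "?v \<in> orbit p z" using orbit.fwd[OF assms(2), of ?i] gx oi by auto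
  have gv: "gen_e ?i ?v = x" using assms(3) oi by (simp add: gen_e_consi)
  have ne: "?v \<noteq> x" using assms(3) oi by simp
  show "multi p z x" unfolding multi_def
    apply (rule exI[of _ ?v], rule exI[of _ "(x, ?i)"], rule exI[of _ "(?v, ?i)"])
    using ne oi assms(2) vo gx gv by (auto simp: edges_iff ends_pair)
qed

lemma edge_otherj:
  assumes "\<epsilon> \<in> schreier_edges p z" "edge_ends \<epsilon> = {x, v}" "v \<noteq> x" "x = word_cons j y" "j \<noteq> 0"
  shows "(\<epsilon> = (x, j) \<and> v = word_cons 0 y) \<or> (\<exists>u. \<epsilon> = (v, j) \<and> v = word_cons 0 u \<and> gen_e j u = y)"
proof -
  obtain a i where e: "\<epsilon> = (a, i)" by (cases \<epsilon>)
  have i: "1 \<le> i" "i \<le> p" "i \<noteq> 0" using assms(1) e by (auto simp: edges_iff)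
  have "{a, gen_e i a} = {x, v}" using assms(2) e by (simp add: ends_pair)
  then have "(a = x \<and> gen_e i a = v) \<or> (a = v \<and> gen_e i a = x)" by (auto simp: doubleton_eq_iff)
  then show ?thesis
  proof
    assume "a = x \<and> gen_e i a = v"
    then show ?thesis using i e assms(3,4,5) by (auto simp: gen_e_wc_cases split: if_splits)
  next
    assume h: "a = v \<and> gen_e i a = x"
    obtain b u where v: "v = word_cons b u" by (rule wc_cases)
    show ?thesis using h assms(3,4,5) i v e by (auto simp: gen_e_wc_cases split: if_splits)
  qed
qed

lemma gen_e_fix_iff:
  assumes "j \<noteq> 0" shows "gen_e j y = y \<longleftrightarrow> y 0 \<noteq> 0 \<and> y 0 \<noteq> j"
proof -
  obtain c y' where y: "y = word_cons c y'" by (rule wc_cases)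
  show ?thesis using assms by (auto simp: y gen_e_wc_cases)
qed

lemma L4:
  assumes "2 \<le> p" "x \<in> orbit p z" "x = word_cons j y" "j \<noteq> 0" "j \<le> p"
  shows "multi p z x \<longleftrightarrow> y 0 \<noteq> 0 \<and> y 0 \<noteq> j"
proof
  assume m: "multi p z x"
  obtain v e1 e2 where h: "v \<noteq> x" "e1 \<in> schreier_edges p z" "e2 \<in> schreier_edges p z" "e1 \<noteq> e2"
    "edge_ends e1 = {x, v}" "edge_ends e2 = {x, v}"
    using m unfolding multi_def by blast
  note a = edge_otherj[OF h(2) h(5) h(1) assms(3,4)] edge_otherj[OF h(3) h(6) h(1) assms(3,4)]
  have "gen_e j y = y" using a h(4) by auto
  then show "y 0 \<noteq> 0 \<and> y 0 \<noteq> j" using gen_e_fix_iff assms(4) by blast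
next
  assume y0: "y 0 \<noteq> 0 \<and> y 0 \<noteq> j"
  then have gy: "gen_e j y = y" using gen_e_fix_iff assms(4) by blast
  let ?v = "word_cons 0 y"
  have gx: "gen_e j x = ?v" using assms(3,4) by (simp add: gen_e_consi)
  have vo: "?v \<in> orbit p z" using orbit.fwd[OF assms(2), of j] gx assms by auto
  have gv: "gen_e j ?v = x" using assms(3,4) gy by (simp add: gen_e_cons0)
  have ne: "?v \<noteq> x" using assms(3,4) by simp
  show "multi p z x" unfolding multi_def
    apply (rule exI[of _ ?v], rule exI[of _ "(x, j)"], rule exI[of _ "(?v, j)"])
    using ne assms vo gx gv by (auto simp: edges_iff ends_pair)
qed



definition LN where "LN p z m = {u \<in> orbit p z. adj p z m u \<and> u \<noteq> m \<and> u 0 = 0}"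

lemma riso_bij: assumes "riso p z z' f g"
  shows "inj_on f (orbit p z)" "f ` orbit p z = orbit p z'"
    "inj_on g (schreier_edges p z)" "g ` schreier_edges p z = schreier_edges p z'"
  using assms unfolding riso_def bij_betw_def by auto

lemma zero_pres:
  assumes "2 \<le> p" "riso p z z' f g" "u \<in> orbit p z"
  shows "f u 0 = 0 \<longleftrightarrow> u 0 = 0"
proof -
  have "f u \<in> orbit p z'" using riso_bij[OF assms(2)] assms(3) by auto
  then show ?thesis using L1[OF assms(1) assms(3)] L1[OF assms(1), of "f u" z'] loop_iff[OF assms(2,3)] by auto
qed

lemma LN_pres:
  assumes "2 \<le> p" "riso p z z' f g" "m \<in> orbit p z"
  shows "LN p z' (f m) = f ` LN p z m"
proof
  note b = riso_bij[OF assms(2)]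
  show "f ` LN p z m \<subseteq> LN p z' (f m)"
  proof
    fix u' assume "u' \<in> f ` LN p z m"
    then obtain u where u: "u \<in> LN p z m" "u' = f u" by blast
    then have uo: "u \<in> orbit p z" "adj p z m u" "u \<noteq> m" "u 0 = 0" by (auto simp: LN_def)
    have "f u \<noteq> f m" using b(1) uo assms(3) by (meson inj_on_eq_iff)
    then show "u' \<in> LN p z' (f m)" unfolding LN_def
      using u uo b adj_iff[OF assms(2,3) uo(1)] zero_pres[OF assms(1,2) uo(1)] by auto
  qed
  show "LN p z' (f m) \<subseteq> f ` LN p z m"
  proof
    fix u' assume u': "u' \<in> LN p z' (f m)"
    then have "u' \<in> orbit p z'" by (auto simp: LN_def)
    then obtain u where u: "u \<in> orbit p z" "u' = f u" using b(2) by blast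
    have "u \<noteq> m" using u' u by (auto simp: LN_def)
    then have "u \<in> LN p z m" unfolding LN_def
      using u u' adj_iff[OF assms(2,3) u(1)] zero_pres[OF assms(1,2) u(1)] by (auto simp: LN_def)
    then show "u' \<in> f ` LN p z m" using u by blast
  qed
qed

definition phi :: "(nat \<Rightarrow> nat) \<times> nat \<Rightarrow> nat \<Rightarrow> nat" where
  "phi e = word_cons (snd e) (gen_e (snd e) (fst e))"
definition psi :: "(nat \<Rightarrow> nat) \<Rightarrow> (nat \<Rightarrow> nat) \<times> nat" where
  "psi m = (geinv (m 0) (wshift m), m 0)"

lemma psi_phi: "snd e \<noteq> 0 \<Longrightarrow> psi (phi e) = e"
  by (cases e) (simp add: psi_def phi_def)

lemma phi_orbit:
  assumes "z 0 \<le> p" "e \<in> schreier_edges p (wshift z)"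
  shows "phi e \<in> orbit p z" "phi e 0 \<noteq> 0"
proof -
  obtain y j where e: "e = (y, j)" by (cases e)
  have "y \<in> orbit p (wshift z)" "1 \<le> j" "j \<le> p" using assms(2) e by (auto simp: edges_iff)
  then have "gen_e j y \<in> orbit p (wshift z)" by (auto intro: orbit.fwd)
  then show "phi e \<in> orbit p z" using orbit_cons[of z p, OF assms(1)] e \<open>j \<le> p\<close> by (simp add: phi_def)
  show "phi e 0 \<noteq> 0" using e \<open>1 \<le> j\<close> by (simp add: phi_def)
qed

lemma psi_edge:
  assumes "z 0 \<le> p" "m \<in> orbit p z" "m 0 \<noteq> 0"
  shows "psi m \<in> schreier_edges p (wshift z)" "phi (psi m) = m"
proof -
  have m: "m 0 \<le> p" "wshift m \<in> orbit p (wshift z)" using orbit_shift[of z p, OF assms(1,2)] by auto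
  have "gen_e (m 0) (geinv (m 0) (wshift m)) = wshift m" using assms(3) by simp
  then have "geinv (m 0) (wshift m) \<in> orbit p (wshift z)"
    using orbit.bwd[OF m(2), of "m 0"] m assms(3) by auto
  then show "psi m \<in> schreier_edges p (wshift z)" using m assms(3) by (simp add: psi_def edges_iff)
  show "phi (psi m) = m" using assms(3) by (simp add: psi_def phi_def)
qed

lemma LN_phi:
  assumes "z 0 \<le> p" "e \<in> schreier_edges p (wshift z)"
  shows "LN p z (phi e) = word_cons 0 ` edge_ends e"
proof -
  obtain y j where e: "e = (y, j)" by (cases e)
  have y: "y \<in> orbit p (wshift z)" "1 \<le> j" "j \<le> p" using assms(2) e by (auto simp: edges_iff)
  have gy: "gen_e j y \<in> orbit p (wshift z)" using y by (auto intro: orbit.fwd)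
  have j0: "j \<noteq> 0" using y by auto
  let ?m = "word_cons j (gen_e j y)"
  have pm: "phi e = ?m" by (simp add: e phi_def)
  have mo: "?m \<in> orbit p z" using phi_orbit[OF assms] pm by simp
  have a1: "word_cons 0 y \<in> orbit p z" using orbit_cons[of z p, OF assms(1) y(1)] by simp
  have a2: "word_cons 0 (gen_e j y) \<in> orbit p z" using orbit_cons[of z p, OF assms(1) gy] by simp
  have "adj p z ?m (word_cons 0 y)" unfolding adj_def
    using a1 y j0 by (intro bexI[of _ "(word_cons 0 y, j)"]) (auto simp: ends_pair edges_iff gen_e_cons0)
  moreover have "adj p z ?m (word_cons 0 (gen_e j y))" unfolding adj_def
    using mo y j0 by (intro bexI[of _ "(?m, j)"]) (auto simp: ends_pair edges_iff gen_e_consi)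
  ultimately have "word_cons 0 ` edge_ends e \<subseteq> LN p z ?m"
    using a1 a2 j0 by (auto simp: LN_def e ends_pair)
  then have sup: "word_cons 0 ` edge_ends e \<subseteq> LN p z (phi e)" by (simp only: pm)
  have "LN p z (phi e) \<subseteq> word_cons 0 ` edge_ends e"
  proof
    fix u assume u: "u \<in> LN p z (phi e)"
    then obtain \<epsilon> where eps: "\<epsilon> \<in> schreier_edges p z" "edge_ends \<epsilon> = {?m, u}" "u \<noteq> ?m"
      by (auto simp: LN_def adj_def pm)
    from edge_otherj[OF eps(1,2,3) refl j0]
    have "u = word_cons 0 (gen_e j y) \<or> (\<exists>u'. u = word_cons 0 u' \<and> gen_e j u' = gen_e j y)" by blast
    then show "u \<in> word_cons 0 ` edge_ends e" using j0 by (auto simp: e ends_pair gen_e_inj)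
  qed
  then show ?thesis using sup by blast
qed

lemma F_into:
  assumes "2 \<le> p" "z 0 \<le> p" "riso p z z' f g" "y \<in> orbit p (wshift z)" "z' 0 \<le> p"
  shows "f (word_cons 0 y) = word_cons 0 (wshift (f (word_cons 0 y)))"
    "wshift (f (word_cons 0 y)) \<in> orbit p (wshift z')"
proof -
  have a: "word_cons 0 y \<in> orbit p z" using orbit_cons[of z p, OF assms(2,4)] by simp
  then have b: "f (word_cons 0 y) \<in> orbit p z'" using riso_bij[OF assms(3)] by auto
  have "f (word_cons 0 y) 0 = 0" using zero_pres[OF assms(1,3) a] by simp
  then show "f (word_cons 0 y) = word_cons 0 (wshift (f (word_cons 0 y)))" by (metis wc_shift)
  show "wshift (f (word_cons 0 y)) \<in> orbit p (wshift z')" using orbit_shift[of z' p, OF assms(5) b] by simp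
qed

lemma G_into:
  assumes "2 \<le> p" "z 0 \<le> p" "riso p z z' f g" "e \<in> schreier_edges p (wshift z)" "z' 0 \<le> p"
  shows "psi (f (phi e)) \<in> schreier_edges p (wshift z')" "phi (psi (f (phi e))) = f (phi e)"
proof -
  have a: "phi e \<in> orbit p z" "phi e 0 \<noteq> 0" using phi_orbit[OF assms(2,4)] by auto
  then have b: "f (phi e) \<in> orbit p z'" using riso_bij[OF assms(3)] by auto
  have "f (phi e) 0 \<noteq> 0" using zero_pres[OF assms(1,3) a(1)] a(2) by simp
  then show "psi (f (phi e)) \<in> schreier_edges p (wshift z')" "phi (psi (f (phi e))) = f (phi e)"
    using psi_edge[OF assms(5) b] by auto
qed


lemma riso_shift:
  assumes "2 \<le> p" "z 0 \<le> p" "z' 0 \<le> p" "riso p z z' f g"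
  shows "riso p (wshift z) (wshift z') (\<lambda>y. wshift (f (word_cons 0 y))) (\<lambda>e. psi (f (phi e)))"
proof -
  let ?Z = "orbit p z" and ?Z' = "orbit p z'"
  let ?f' = "inv_into ?Z f" and ?g' = "inv_into (schreier_edges p z) g"
  have r': "riso p z' z ?f' ?g'" using riso_inv[OF assms(4)] .
  note b = riso_bij[OF assms(4)]
  let ?F = "\<lambda>y. wshift (f (word_cons 0 y))" and ?F' = "\<lambda>y. wshift (?f' (word_cons 0 y))"
  have bF: "bij_betw ?F (orbit p (wshift z)) (orbit p (wshift z'))"
  proof (rule bij_betw_byWitness[where f'="?F'"])
    show "\<forall>a\<in>orbit p (wshift z). ?F' (?F a) = a"
    proof
      fix a assume a: "a \<in> orbit p (wshift z)"
      have wo: "word_cons 0 a \<in> ?Z" using orbit_cons[of z p, OF assms(2) a] by simp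
      have "f (word_cons 0 a) = word_cons 0 (?F a)" using F_into(1)[OF assms(1,2,4) a assms(3)] .
      then have "?f' (word_cons 0 (?F a)) = word_cons 0 a" using riso_inv_apply[OF assms(4) wo] by simp
      then show "?F' (?F a) = a" by simp
    qed
    show "\<forall>a\<in>orbit p (wshift z'). ?F (?F' a) = a"
    proof
      fix a assume a: "a \<in> orbit p (wshift z')"
      have wo: "word_cons 0 a \<in> ?Z'" using orbit_cons[of z' p, OF assms(3) a] by simp
      have "?f' (word_cons 0 a) = word_cons 0 (?F' a)" using F_into(1)[OF assms(1,3) r' a assms(2)] .
      moreover have "f (?f' (word_cons 0 a)) = word_cons 0 a" using wo b(2) by (simp add: f_inv_into_f)
      ultimately show "?F (?F' a) = a" by simp
    qed
    show "?F ` orbit p (wshift z) \<subseteq> orbit p (wshift z')" using F_into(2)[OF assms(1,2,4) _ assms(3)] by auto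
    show "?F' ` orbit p (wshift z') \<subseteq> orbit p (wshift z)" using F_into(2)[OF assms(1,3) r' _ assms(2)] by auto
  qed
  let ?G = "\<lambda>e. psi (f (phi e))" and ?G' = "\<lambda>e. psi (?f' (phi e))"
  have bG: "bij_betw ?G (schreier_edges p (wshift z)) (schreier_edges p (wshift z'))"
  proof (rule bij_betw_byWitness[where f'="?G'"])
    show "\<forall>a\<in>schreier_edges p (wshift z). ?G' (?G a) = a"
    proof
      fix a assume a: "a \<in> schreier_edges p (wshift z)"
      have "snd a \<noteq> 0" using a by (cases a) (auto simp: edges_iff)
      then show "?G' (?G a) = a" using G_into(2)[OF assms(1,2,4) a assms(3)] phi_orbit[OF assms(2) a]
        riso_inv_apply[OF assms(4)] psi_phi by simp
    qed
    show "\<forall>a\<in>schreier_edges p (wshift z'). ?G (?G' a) = a"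
    proof
      fix a assume a: "a \<in> schreier_edges p (wshift z')"
      have "snd a \<noteq> 0" using a by (cases a) (auto simp: edges_iff)
      moreover have "f (?f' (phi a)) = phi a" using phi_orbit(1)[OF assms(3) a] b(2) by (simp add: f_inv_into_f)
      ultimately show "?G (?G' a) = a" using G_into(2)[OF assms(1,3) r' a assms(2)] psi_phi by simp
    qed
    show "?G ` schreier_edges p (wshift z) \<subseteq> schreier_edges p (wshift z')"
      using G_into(1)[OF assms(1,2,4) _ assms(3)] by auto
    show "?G' ` schreier_edges p (wshift z') \<subseteq> schreier_edges p (wshift z)"
      using G_into(1)[OF assms(1,3) r' _ assms(2)] by auto
  qed
  have ends: "edge_ends (?G e) = ?F ` edge_ends e" if e: "e \<in> schreier_edges p (wshift z)" for e
  proof -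
    have "word_cons 0 ` edge_ends (?G e) = LN p z' (phi (?G e))"
      using LN_phi[OF assms(3) G_into(1)[OF assms(1,2,4) e assms(3)]] by simp
    also have "\<dots> = LN p z' (f (phi e))" using G_into(2)[OF assms(1,2,4) e assms(3)] by simp
    also have "\<dots> = f ` LN p z (phi e)" using LN_pres[OF assms(1,4) phi_orbit(1)[OF assms(2) e]] .
    also have "\<dots> = f ` word_cons 0 ` edge_ends e" using LN_phi[OF assms(2) e] by simp
    finally have "wshift ` word_cons 0 ` edge_ends (?G e) = wshift ` f ` word_cons 0 ` edge_ends e" by simp
    then show ?thesis by (simp add: image_comp o_def)
  qed
  show ?thesis unfolding riso_def using bF bG ends by blast
qed

lemma riso_shift_root:
  assumes "2 \<le> p" "z 0 \<le> p" "z' 0 \<le> p" "riso p z z' f g" "f z = z'"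
    and c: "z 0 = 0 \<or> ((z 1 = 0) \<longleftrightarrow> (z' 1 = 0))"
  shows "wshift (f (word_cons 0 (wshift z))) = wshift z'"
proof -
  have zo: "z \<in> orbit p z" by (rule orbit.base)
  have z'0: "z' 0 = 0 \<longleftrightarrow> z 0 = 0" using zero_pres[OF assms(1,4) zo] assms(5) by simp
  show ?thesis
  proof (cases "z 0 = 0")
    case True
    then have "word_cons 0 (wshift z) = z" by (metis wc_shift)
    then show ?thesis using assms(5) by simp
  next
    case False
    let ?j = "z 0" and ?j' = "z' 0"
    let ?u = "word_cons 0 (wshift z)"
    have j: "?j \<noteq> 0" "?j' \<noteq> 0" using False z'0 by auto
    have gz: "gen_e ?j z = ?u" using gen_e_consi[of ?j "wshift z"] j by simp
    have uo: "?u \<in> orbit p z" using orbit.fwd[OF zo, of ?j] gz j assms(2) by auto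
    have "adj p z z ?u" unfolding adj_def using zo j assms(2) gz
      by (intro bexI[of _ "(z, ?j)"]) (auto simp: ends_pair edges_iff)
    moreover have une: "?u \<noteq> z" using j(1) by (metis wc0)
    ultimately have "?u \<in> LN p z z" using uo unfolding LN_def by simp
    then have fu: "f ?u \<in> LN p z' z'" using LN_pres[OF assms(1,4) zo] assms(5) by auto
    then obtain eps where eps: "eps \<in> schreier_edges p z'" "edge_ends eps = {z', f ?u}" "f ?u \<noteq> z'"
      by (auto simp: LN_def adj_def)
    have "z' = word_cons ?j' (wshift z')" by simp
    from edge_otherj[OF eps(1,2,3) this j(2)]
    have cs: "f ?u = word_cons 0 (wshift z') \<or> (\<exists>w. f ?u = word_cons 0 w \<and> gen_e ?j' w = wshift z')" by blast
    show ?thesis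
    proof (cases "f ?u = word_cons 0 (wshift z')")
      case True then show ?thesis by simp
    next
      case False
      then obtain w where w: "f ?u = word_cons 0 w" "gen_e ?j' w = wshift z'" "w \<noteq> wshift z'" using cs by blast
      have fuo: "f ?u \<in> orbit p z'" using fu by (auto simp: LN_def)
      have "multi p z ?u \<longleftrightarrow> wshift z 0 \<noteq> 0" using L2[OF assms(1) uo refl] .
      moreover have "multi p z' (f ?u) \<longleftrightarrow> w 0 \<noteq> 0" using L2[OF assms(1) fuo w(1)] .
      moreover note multi_iff[OF assms(4) uo]
      ultimately have "w 0 \<noteq> 0 \<longleftrightarrow> z 1 \<noteq> 0" by (simp add: wshift_def)
      moreover have g0: "gen_e ?j' w 0 = z' 1" using fun_cong[OF w(2), of 0] by (simp add: wshift_def)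
      ultimately have iff: "w 0 \<noteq> 0 \<longleftrightarrow> gen_e ?j' w 0 \<noteq> 0" using c j(1) by auto
      have ne: "gen_e ?j' w \<noteq> w" using w(2,3) by simp
      obtain c' w' where cw: "w = word_cons c' w'" by (rule wc_cases)
      have False using iff ne j(2) unfolding cw by (cases "c' = 0"; cases "c' = ?j'") (auto simp: gen_e_wc_cases)
      then show ?thesis ..
    qed
  qed
qed



definition RI where "RI p z z' = (\<exists>f g. riso p z z' f g \<and> f z = z')"

lemma RI_shift:
  assumes "2 \<le> p" "z 0 \<le> p" "z' 0 \<le> p" "RI p z z'" "z 0 = 0 \<or> ((z 1 = 0) \<longleftrightarrow> (z' 1 = 0))"
  shows "RI p (wshift z) (wshift z')"
proof -
  obtain f g where r: "riso p z z' f g" "f z = z'" using assms(4) unfolding RI_def by blast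
  show ?thesis unfolding RI_def
    using riso_shift[of p z z', OF assms(1,2,3) r(1)] riso_shift_root[of p z z', OF assms(1,2,3) r(1,2) assms(5)]
    by blast
qed

definition tp :: "(nat \<Rightarrow> nat) \<Rightarrow> nat \<Rightarrow> bool" where
  "tp z n = (if z n = 0 then z (Suc n) = 0 else (z (Suc n) = 0 \<or> z (Suc n) = z n))"

lemma RI_tp0:
  assumes "2 \<le> p" "RI p z z'" "z 0 = z' 0" "z 0 \<le> p"
  shows "tp z 0 = tp z' 0"
proof -
  obtain f g where r: "riso p z z' f g" "f z = z'" using assms(2) unfolding RI_def by blast
  have zo: "z \<in> orbit p z" by (rule orbit.base)
  have z'o: "z' \<in> orbit p z'" by (rule orbit.base)
  have m: "multi p z' z' \<longleftrightarrow> multi p z z" using multi_iff[OF r(1) zo] r(2) by simp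
  show ?thesis
  proof (cases "z 0 = 0")
    case True
    have e1: "z = word_cons 0 (wshift z)" using True by (metis wc_shift)
    have e2: "z' = word_cons 0 (wshift z')" using True assms(3) by (metis wc_shift)
    have a: "multi p z z \<longleftrightarrow> z 1 \<noteq> 0" using L2[OF assms(1) zo e1] by (simp add: wshift_def)
    have b: "multi p z' z' \<longleftrightarrow> z' 1 \<noteq> 0" using L2[OF assms(1) z'o e2] by (simp add: wshift_def)
    have "tp z 0 = (z 1 = 0)" "tp z' 0 = (z' 1 = 0)" using True assms(3) by (simp_all add: tp_def)
    then show ?thesis using a b m by (metis neq0_conv)
  next
    case False
    have e1: "z = word_cons (z 0) (wshift z)" by simp
    have e2: "z' = word_cons (z' 0) (wshift z')" by simp
    have a: "multi p z z \<longleftrightarrow> z 1 \<noteq> 0 \<and> z 1 \<noteq> z 0"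
      using L4[OF assms(1) zo e1 False assms(4)] by (simp add: wshift_def)
    have b: "multi p z' z' \<longleftrightarrow> z' 1 \<noteq> 0 \<and> z' 1 \<noteq> z' 0"
      using L4[OF assms(1) z'o e2] False assms(3,4) by (simp add: wshift_def)
    have "tp z 0 = (z 1 = 0 \<or> z 1 = z 0)" "tp z' 0 = (z' 1 = 0 \<or> z' 1 = z 0)"
      using False assms(3) by (simp_all add: tp_def)
    then show ?thesis using a b m assms(3) by auto
  qed
qed

definition dropn :: "nat \<Rightarrow> (nat \<Rightarrow> nat) \<Rightarrow> nat \<Rightarrow> nat" where
  "dropn n z = (\<lambda>k. z (n + k))"

lemma RI_drop:
  assumes "2 \<le> p" "z \<in> X_inf p" "z' \<in> X_inf p" "RI p z z'" "\<forall>k\<le>n. z k = z' k"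
  shows "RI p (dropn n z) (dropn n z')"
  using assms(5)
proof (induction n)
  case 0
  have "dropn 0 z = z" "dropn 0 z' = z'" by (auto simp: dropn_def)
  then show ?case using assms(4) by simp
next
  case (Suc n)
  have IH: "RI p (dropn n z) (dropn n z')" using Suc by auto
  have "wshift (dropn n z) = dropn (Suc n) z" "wshift (dropn n z') = dropn (Suc n) z'"
    by (auto simp: wshift_def dropn_def)
  moreover have "RI p (wshift (dropn n z)) (wshift (dropn n z'))"
    apply (rule RI_shift[OF assms(1) _ _ IH])
    using assms(2,3) Suc.prems by (auto simp: dropn_def X_inf_def)
  ultimately show ?case by simp
qed

lemma RI_tp:
  assumes "2 \<le> p" "z \<in> X_inf p" "z' \<in> X_inf p" "RI p z z'" "\<forall>k\<le>n. z k = z' k"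
  shows "tp z n = tp z' n"
proof -
  have "tp (dropn n z) 0 = tp (dropn n z') 0"
  proof (rule RI_tp0[OF assms(1) RI_drop[OF assms]])
    show "dropn n z 0 = dropn n z' 0" using assms(5) by (simp add: dropn_def)
    show "dropn n z 0 \<le> p" using assms(2) by (simp add: dropn_def X_inf_def)
  qed
  moreover have "tp (dropn n z) 0 = tp z n" "tp (dropn n z') 0 = tp z' n" by (simp_all add: tp_def dropn_def)
  ultimately show ?thesis by simp
qed

lemma forbid:
  assumes "2 \<le> p"
  shows "\<exists>a\<le>p. \<forall>z'. z' n = z n \<longrightarrow> tp z' n = tp z n \<longrightarrow> z' (Suc n) \<noteq> a"
proof (cases "z n = 0")
  case True
  show ?thesis
  proof (cases "z (Suc n) = 0")
    case True
    then show ?thesis using \<open>z n = 0\<close> assms by (intro exI[of _ 1]) (auto simp: tp_def)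
  next
    case False
    then show ?thesis using \<open>z n = 0\<close> assms by (intro exI[of _ 0]) (auto simp: tp_def)
  qed
next
  case False
  show ?thesis
  proof (cases "tp z n")
    case True
    then show ?thesis using False other[OF assms, of "z n"]
      by (intro exI[of _ "other (z n)"]) (auto simp: tp_def)
  next
    case f2: False
    then show ?thesis using False by (intro exI[of _ 0]) (auto simp: tp_def)
  qed
qed



lemma rr: "restrict (restrict z {..Suc N}) {..N} = restrict z {..(N::nat)}"
  by (rule ext) (simp add: restrict_def)

lemma card_P:
  fixes p :: nat and S :: "(nat \<Rightarrow> nat) set"
  assumes "S \<subseteq> X_inf p"
    and forb: "\<forall>z\<in>S. \<forall>n. \<exists>a\<le>p. \<forall>z'\<in>S. (\<forall>k\<le>n. z' k = z k) \<longrightarrow> z' (Suc n) \<noteq> a"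
  shows "finite ((\<lambda>z. restrict z {..N}) ` S) \<and> card ((\<lambda>z. restrict z {..N}) ` S) \<le> (p+1) * p^N"
proof -
  let ?P = "\<lambda>N. (\<lambda>z. restrict z {..N}) ` S"
  have fin: "finite (?P N)" for N
  proof (rule finite_subset)
    show "?P N \<subseteq> PiE {..N} (\<lambda>_. {0..p})"
    proof (rule image_subsetI)
      fix z assume "z \<in> S"
      then have "\<forall>i\<in>{..N}. z i \<in> {0..p}" using assms(1) by (auto simp: X_inf_def)
      then show "restrict z {..N} \<in> PiE {..N} (\<lambda>_. {0..p})" by (simp only: restrict_PiE_iff)
    qed
    show "finite (PiE {..N} (\<lambda>_. {0..p}))" by (rule finite_PiE) auto
  qed
  have "card (?P N) \<le> (p+1) * p^N"
  proof (induction N)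
    case 0
    have "?P 0 \<subseteq> (\<lambda>c. restrict (\<lambda>_. c) {..0::nat}) ` {0..p}"
    proof
      fix t assume "t \<in> ?P 0"
      then obtain z where z: "z \<in> S" "t = restrict z {..0}" by blast
      then have "t = restrict (\<lambda>_. z 0) {..0}" by (auto simp: restrict_def intro!: ext)
      moreover have "z 0 \<in> {0..p}" using z assms(1) by (auto simp: X_inf_def)
      ultimately show "t \<in> (\<lambda>c. restrict (\<lambda>_. c) {..0::nat}) ` {0..p}" by blast
    qed
    then have "card (?P 0) \<le> card ((\<lambda>c. restrict (\<lambda>_. c) {..0::nat}) ` {0..p})"
      by (intro card_mono) auto
    also have "\<dots> \<le> card {0..p}" by (rule card_image_le) auto
    also have "\<dots> = (p+1) * p^0" by simp
    finally show ?case .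
  next
    case (Suc N)
    let ?Fib = "\<lambda>s. {t \<in> ?P (Suc N). restrict t {..N} = s}"
    have un: "?P (Suc N) = (\<Union>s\<in>?P N. ?Fib s)"
    proof
      show "?P (Suc N) \<subseteq> (\<Union>s\<in>?P N. ?Fib s)"
      proof
        fix t assume t: "t \<in> ?P (Suc N)"
        then obtain z where z: "z \<in> S" "t = restrict z {..Suc N}" by blast
        have "restrict z {..N} \<in> ?P N" using z by blast
        moreover have "t \<in> ?Fib (restrict z {..N})" using t z rr by simp
        ultimately show "t \<in> (\<Union>s\<in>?P N. ?Fib s)" by blast
      qed
    qed blast
    have fibc: "card (?Fib s) \<le> p" if s: "s \<in> ?P N" for s
    proof -
      obtain z where z: "z \<in> S" "s = restrict z {..N}" using s by blast
      obtain a where a: "a \<le> p" "\<forall>z'\<in>S. (\<forall>k\<le>N. z' k = z k) \<longrightarrow> z' (Suc N) \<noteq> a"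
        using forb z(1) by blast
      have "?Fib s \<subseteq> (\<lambda>c. s(Suc N := c)) ` ({0..p} - {a})"
      proof
        fix t assume t: "t \<in> ?Fib s"
        then obtain z' where z': "z' \<in> S" "t = restrict z' {..Suc N}" by blast
        have "restrict z' {..N} = restrict z {..N}" using t z' z rr by simp
        then have "\<forall>k\<le>N. z' k = z k" by (metis atMost_iff restrict_apply')
        then have "z' (Suc N) \<noteq> a" using a z' by blast
        moreover have "z' (Suc N) \<le> p" using z' assms(1) by (auto simp: X_inf_def)
        moreover have "t = s(Suc N := z' (Suc N))"
        proof (rule ext)
          fix k
          have tk: "t k = (if k \<le> Suc N then z' k else undefined)" using z'(2) by simp
          have sk: "s k = (if k \<le> N then z k else undefined)" using z(2) by simp
          show "t k = (s(Suc N := z' (Suc N))) k"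
          proof (cases "k = Suc N")
            case True then show ?thesis using tk by simp
          next
            case False
            then have "k \<le> Suc N \<longleftrightarrow> k \<le> N" by auto
            then show ?thesis using tk sk False \<open>\<forall>k\<le>N. z' k = z k\<close> by simp
          qed
        qed
        ultimately show "t \<in> (\<lambda>c. s(Suc N := c)) ` ({0..p} - {a})" by auto
      qed
      then have "card (?Fib s) \<le> card ((\<lambda>c. s(Suc N := c)) ` ({0..p} - {a}))"
        by (intro card_mono) auto
      also have "\<dots> \<le> card ({0..p} - {a})" by (rule card_image_le) auto
      also have "\<dots> = p" using a by simp
      finally show ?thesis .
    qed
    have "card (?P (Suc N)) = card (\<Union>s\<in>?P N. ?Fib s)" using un by (rule arg_cong[where f=card])
    also have "\<dots> \<le> (\<Sum>s\<in>?P N. card (?Fib s))"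
      by (rule card_UN_le) (rule fin)
    also have "\<dots> \<le> (\<Sum>s\<in>?P N. p)" by (rule sum_mono) (use fibc in auto)
    also have "\<dots> = card (?P N) * p" by simp
    also have "\<dots> \<le> (p+1) * p^N * p" using Suc.IH by (rule mult_right_mono) simp
    also have "\<dots> = (p+1) * p^(Suc N)" by (simp only: power_Suc2 mult.assoc)
    finally show ?case .
  qed
  then show ?thesis using fin by blast
qed


lemma aux_pow:
  fixes x :: real assumes q: "x + 1 \<noteq> 0"
  shows "(x+1) * x^N * (1/(x+1))^Suc N = (x/(x+1))^N"
proof -
  have "(x+1) * x^N * (1/(x+1))^Suc N = ((x+1) * (1/(x+1))) * (x^N * (1/(x+1))^N)"
    by (simp only: power_Suc2 mult_ac)
  also have "\<dots> = x^N * (1/(x+1))^N" using q by simp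
  also have "\<dots> = (x * (1/(x+1)))^N" by (simp only: power_mult_distrib)
  also have "\<dots> = (x/(x+1))^N" by simp
  finally show ?thesis .
qed
lemma aux_pow2: "real ((p+1) * p^N) * (1 / real (p+1)) ^ Suc N = (real p / real (p+1)) ^ N"
proof -
  have "real ((p+1) * p^N) = (real p + 1) * real p ^ N" by (simp add: algebra_simps)
  moreover have "real (p+1) = real p + 1" by simp
  ultimately show ?thesis using aux_pow[of "real p" N] by (simp only:)
qed

lemma null_forbid:
  fixes p :: nat and S :: "(nat \<Rightarrow> nat) set"
  assumes p1: "1 \<le> p" and SX: "S \<subseteq> X_inf p"
    and forb: "\<forall>z\<in>S. \<forall>n. \<exists>a\<le>p. \<forall>z'\<in>S. (\<forall>k\<le>n. z' k = z k) \<longrightarrow> z' (Suc n) \<noteq> a"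
  shows "S \<in> null_sets (completion (nu p))"
proof -
  define M where "M = (\<lambda>_::nat. measure_pmf (pmf_of_set {0..p}))"
  have nu: "nu p = PiM UNIV M" by (simp add: nu_def M_def)
  define P where "P N = (\<lambda>z. restrict z {..N}) ` S" for N
  define C where "C N s = prod_emb UNIV M {..N} (PiE {..N} (\<lambda>i. {s i}))" for N s
  define A where "A N = (\<Union>s\<in>P N. C N s)" for N
  define B where "B = (\<Inter>N. A N)"
  have finP: "finite (P N)" and cardP: "card (P N) \<le> (p+1) * p^N" for N
    using card_P[OF SX forb, of N] by (auto simp: P_def)
  have Csets: "C N s \<in> sets (nu p)" for N s
    unfolding C_def nu by (rule sets_PiM_I) (auto simp: M_def)
  have Asets: "A N \<in> sets (nu p)" for N
    unfolding A_def using finP Csets by (intro sets.finite_UN) auto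
  have Bsets: "B \<in> sets (nu p)" unfolding B_def using Asets by auto
  have prob: "prob_space (M i)" for i unfolding M_def by (rule prob_space_measure_pmf)
  have Cmeas: "emeasure (nu p) (C N s) = ennreal ((1 / (p+1)) ^ Suc N)" if s: "s \<in> P N" for N s
  proof -
    have sv: "s i \<in> {0..p}" if "i \<in> {..N}" for i
      using s that SX by (auto simp: P_def X_inf_def)
    have "emeasure (nu p) (C N s) = (\<Prod>i\<in>{..N}. emeasure (M i) {s i})"
      unfolding C_def nu by (rule emeasure_PiM_emb) (auto simp: M_def intro: prob_space_measure_pmf)
    also have "\<dots> = (\<Prod>i\<in>{..N}. ennreal (1 / (p+1)))"
    proof (rule prod.cong)
      fix i assume "i \<in> {..N}"
      then show "emeasure (M i) {s i} = ennreal (1 / (p+1))"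
        using sv[of i] by (simp add: M_def emeasure_pmf_single pmf_of_set indicator_def)
    qed simp
    also have "\<dots> = ennreal ((1 / (p+1)) ^ Suc N)" by (simp only: prod_constant card_atMost) (rule ennreal_power, simp)
    finally show ?thesis .
  qed
  have Ameas: "emeasure (nu p) (A N) \<le> ennreal ((p / (p+1)) ^ N)" for N
  proof -
    have "emeasure (nu p) (A N) \<le> (\<Sum>s\<in>P N. emeasure (nu p) (C N s))"
      unfolding A_def using finP Csets by (intro emeasure_subadditive_finite) auto
    also have "\<dots> = (\<Sum>s\<in>P N. ennreal ((1 / (p+1)) ^ Suc N))"
      using Cmeas by (rule sum.cong[OF refl])
    also have "\<dots> = ennreal (real (card (P N)) * (1 / (p+1)) ^ Suc N)"
      by (subst ennreal_mult) (auto simp: ennreal_of_nat_eq_real_of_nat)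
    also have "\<dots> \<le> ennreal ((p / (p+1)) ^ N)"
    proof (rule ennreal_leI)
      have "real (card (P N)) * (1 / (p+1)) ^ Suc N \<le> real ((p+1) * p^N) * (1 / (p+1)) ^ Suc N"
      proof (rule mult_right_mono)
        show "real (card (P N)) \<le> real ((p+1) * p^N)" using cardP[of N] by (simp only: of_nat_le_iff)
      qed simp
      also have "\<dots> = (p / (p+1)) ^ N" by (rule aux_pow2)
      finally show "real (card (P N)) * (1 / (p+1)) ^ Suc N \<le> (p / (p+1)) ^ N" .
    qed
    finally show ?thesis .
  qed
  have "emeasure (nu p) B \<le> ennreal ((p / (p+1)) ^ N)" for N
  proof -
    have "emeasure (nu p) B \<le> emeasure (nu p) (A N)"
      using Asets Bsets by (intro emeasure_mono) (auto simp: B_def)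
    then show ?thesis using Ameas[of N] by (rule order_trans)
  qed
  moreover have "(\<lambda>N. ennreal ((p / (p+1)) ^ N)) \<longlonglongrightarrow> ennreal 0"
    by (intro tendsto_ennrealI LIMSEQ_power_zero) auto
  ultimately have "emeasure (nu p) B \<le> ennreal 0"
    by (intro LIMSEQ_le_const[of "\<lambda>N. ennreal ((p / (p+1)) ^ N)"]) auto
  then have Bnull: "B \<in> null_sets (nu p)" using Bsets by auto
  have "S \<subseteq> B"
  proof
    fix z assume z: "z \<in> S"
    have "z \<in> C N (restrict z {..N})" for N
      unfolding C_def prod_emb_def nu by (auto simp: space_PiM M_def)
    moreover have "restrict z {..N} \<in> P N" for N using z by (auto simp: P_def)
    ultimately show "z \<in> B" by (auto simp: B_def A_def)
  qed
  then show ?thesis using Bnull null_sets_completion_iff2 by blast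
qed



fun applyl :: "(nat \<times> bool) list \<Rightarrow> (nat \<Rightarrow> nat) \<Rightarrow> nat \<Rightarrow> nat" where
  "applyl [] w = w"
| "applyl ((i, b) # l) w = (if b then gen_e i (applyl l w) else geinv i (applyl l w))"

lemma orbit_countable: "countable (orbit p w)"
proof -
  have "orbit p w \<subseteq> range (\<lambda>l. applyl l w)"
  proof
    fix x assume "x \<in> orbit p w"
    then show "x \<in> range (\<lambda>l. applyl l w)"
    proof (induction rule: orbit.induct)
      case base
      then show ?case by (metis applyl.simps(1) rangeI)
    next
      case (fwd x i)
      then obtain l where "x = applyl l w" by blast
      then have "gen_e i x = applyl ((i, True) # l) w" by simp
      then show ?case by (metis rangeI)
    next
      case (bwd x i y)
      then obtain l where "x = applyl l w" by blast
      moreover have "y = geinv i x" using bwd by (metis geinv_gen_e not_one_le_zero)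
      ultimately have "y = applyl ((i, False) # l) w" by simp
      then show ?case by (metis rangeI)
    qed
  qed
  moreover have "countable (range (\<lambda>l::(nat \<times> bool) list. applyl l w))" by simp
  ultimately show ?thesis by (rule countable_subset)
qed

lemma R_null:
  assumes p2: "2 \<le> p"
  shows "{z \<in> X_inf p. \<exists>f g. riso p z w f g \<and> f z = v} \<in> null_sets (completion (nu p))"
proof (rule null_forbid)
  let ?R = "{z \<in> X_inf p. \<exists>f g. riso p z w f g \<and> f z = v}"
  show "1 \<le> p" using p2 by simp
  show "?R \<subseteq> X_inf p" by blast
  have RI: "RI p z z'" if z: "z \<in> ?R" and z': "z' \<in> ?R" for z z'
  proof -
    obtain f g where r: "riso p z w f g" "f z = v" using z by blast
    obtain f' g' where r': "riso p z' w f' g'" "f' z' = v" using z' by blast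
    have ri: "riso p w z' (inv_into (orbit p z') f') (inv_into (schreier_edges p z') g')"
      using riso_inv[OF r'(1)] .
    have "inv_into (orbit p z') f' v = z'" using riso_inv_apply[OF r'(1) orbit.base] r'(2) by simp
    then show ?thesis unfolding RI_def using riso_comp[OF r(1) ri] r(2) by auto
  qed
  show "\<forall>z\<in>?R. \<forall>n. \<exists>a\<le>p. \<forall>z'\<in>?R. (\<forall>k\<le>n. z' k = z k) \<longrightarrow> z' (Suc n) \<noteq> a"
  proof (intro ballI allI)
    fix z n assume z: "z \<in> ?R"
    obtain a where a: "a \<le> p" "\<forall>z'. z' n = z n \<longrightarrow> tp z' n = tp z n \<longrightarrow> z' (Suc n) \<noteq> a"
      using forbid[OF p2, of n z] by blast
    show "\<exists>a\<le>p. \<forall>z'\<in>?R. (\<forall>k\<le>n. z' k = z k) \<longrightarrow> z' (Suc n) \<noteq> a"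
    proof (intro exI[of _ a] conjI ballI impI)
      fix z' assume z': "z' \<in> ?R" and ag: "\<forall>k\<le>n. z' k = z k"
      have "tp z n = tp z' n" using RI_tp[OF p2 _ _ RI[OF z z']] z z' ag by auto
      then show "z' (Suc n) \<noteq> a" using a ag by auto
    qed (use a in auto)
  qed
qed

theorem corollary4p25:
  fixes p :: nat and w :: "nat \<Rightarrow> nat"
  assumes "p \<ge> 2" and "w \<in> X_inf p"
  shows "iso_class p w \<in> null_sets (completion (nu p))"
proof -
  let ?R = "\<lambda>v. {z \<in> X_inf p. \<exists>f g. riso p z w f g \<and> f z = v}"
  have sub: "iso_class p w \<subseteq> (\<Union>v\<in>orbit p w. ?R v)"
  proof
    fix z assume z: "z \<in> iso_class p w"
    then obtain f g where r: "riso p z w f g"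
      unfolding iso_class_def schreier_iso_def riso_def by blast
    have "f z \<in> orbit p w" using r orbit.base unfolding riso_def bij_betw_def by blast
    then show "z \<in> (\<Union>v\<in>orbit p w. ?R v)" using z r unfolding iso_class_def by blast
  qed
  have "(\<Union>v\<in>orbit p w. ?R v) \<in> null_sets (completion (nu p))"
    using orbit_countable R_null[OF assms(1)] by (intro null_sets_UN') auto
  then show ?thesis using sub null_sets_completion_subset by blast
qed


end
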